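(* Let $X$ be a zero-mean random vector in $\mathbb{R}^d$ such that for some $\sigma>0$, $\Pr(\|X\|\ge t)\le2\exp(-t^2/\sigma^2)$ for all $t>0$. Then for any $\delta\in(0,1)$ there exists a random vector $\bar X$ such that: (i) $\mathbb{E}[\bar X]=0$; (ii) $\Pr(\bar X=X)\ge1-\delta$; (iii) $\Pr\big(\|\bar X\|<3\sigma\sqrt{\ln(4/\delta)}\big)=1$.
   Context: $\|\cdot\|$ is the Euclidean norm and $\ln$ the natural logarithm. $\bar X$ may be defined on an extension of the probability space carrying $X$. *)

theory Defs
  imports "HOL-Probability.Probability"
begin

end

theory Submission
  imports Defs
begin

lemma tail_nn:
  fixes Y :: "'a \<Rightarrow> real"
  assumes P: "prob_space M" and Ym: "Y \<in> borel_measurable M" and R: "R > 0" and b: "b \<ge> 0"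
    and tl: "\<And>k::nat. measure M {\<omega>\<in>space M. Y \<omega> \<ge> (real k + 1) * R} \<le> b * (1/2)^k"
  shows "(\<integral>\<^sup>+\<omega>. ennreal (if Y \<omega> \<ge> R then Y \<omega> else 0) \<partial>M) \<le> ennreal (4 * R * b)"
proof -
  interpret prob_space M by fact
  define A where "A k = {\<omega>\<in>space M. Y \<omega> \<ge> (real k + 1) * R}" for k :: nat
  have Am: "A k \<in> sets M" for k unfolding A_def using Ym by measurable
  have pw: "ennreal (if Y \<omega> \<ge> R then Y \<omega> else 0) \<le> (\<Sum>k. ennreal (2*R) * indicator (A k) \<omega>)"
    if w: "\<omega> \<in> space M" for \<omega>
  proof (cases "Y \<omega> \<ge> R")
    case False then show ?thesis by simp
  next
    case True
    define n where "n = nat \<lfloor>Y \<omega> / R\<rfloor>"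
    have f1: "Y \<omega> / R \<ge> 1" using True R by simp
    have fl1: "\<lfloor>Y \<omega> / R\<rfloor> \<ge> 1" using f1 by (simp add: le_floor_iff)
    have rn: "real n = of_int \<lfloor>Y \<omega> / R\<rfloor>" unfolding n_def using fl1 by simp
    have n1: "real n \<ge> 1" using rn fl1 by simp
    have nle: "real n * R \<le> Y \<omega>"
    proof -
      have "real n \<le> Y \<omega> / R" unfolding rn by (rule of_int_floor_le)
      then show ?thesis using R by (simp add: field_simps)
    qed
    have ylt: "Y \<omega> < (real n + 1) * R"
    proof -
      have "Y \<omega> / R < real n + 1" unfolding rn by (rule real_of_int_floor_add_one_gt)
      then show ?thesis using R by (simp add: field_simps)
    qed
    have "Y \<omega> \<le> 2 * real n * R" using ylt n1 R by (smt (verit) mult_right_mono)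
    then have "ennreal (if Y \<omega> \<ge> R then Y \<omega> else 0) \<le> ennreal (real n * (2*R))"
      using True by (auto simp: algebra_simps intro!: ennreal_leI)
    also have "\<dots> = (\<Sum>k<n. ennreal (2*R) * indicator (A k) \<omega>)"
    proof -
      have "k < n \<Longrightarrow> \<omega> \<in> A k" for k
      proof -
        assume "k < n"
        then have "(real k + 1) * R \<le> real n * R" using R by (intro mult_right_mono) auto
        then show "\<omega> \<in> A k" using nle w unfolding A_def by auto
      qed
      then have "(\<Sum>k<n. ennreal (2*R) * indicator (A k) \<omega>) = (\<Sum>k<n. ennreal (2*R))"
        by (intro sum.cong) auto
      then show ?thesis using R by (simp add: ennreal_of_nat_eq_real_of_nat ennreal_mult' mult.commute)
    qed
    also have "\<dots> \<le> (\<Sum>k. ennreal (2*R) * indicator (A k) \<omega>)"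
      by (rule sum_le_suminf) auto
    finally show ?thesis .
  qed
  have "(\<integral>\<^sup>+\<omega>. ennreal (if Y \<omega> \<ge> R then Y \<omega> else 0) \<partial>M) \<le> (\<integral>\<^sup>+\<omega>. (\<Sum>k. ennreal (2*R) * indicator (A k) \<omega>) \<partial>M)"
    by (intro nn_integral_mono pw)
  also have "\<dots> = (\<Sum>k. ennreal (2*R) * emeasure M (A k))"
    by (subst nn_integral_suminf) (auto simp: Am nn_integral_cmult_indicator intro!: borel_measurable_times_ennreal borel_measurable_indicator)
  also have "\<dots> \<le> (\<Sum>k. ennreal (2*R*b*(1/2)^k))"
  proof (intro suminf_le allI)
    fix k
    have "emeasure M (A k) \<le> ennreal (b*(1/2)^k)"
      using tl[of k] by (simp add: emeasure_eq_measure A_def ennreal_leI)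
    then have "ennreal (2*R) * emeasure M (A k) \<le> ennreal (2*R) * ennreal (b*(1/2)^k)"
      by (rule mult_left_mono) auto
    then show "ennreal (2*R) * emeasure M (A k) \<le> ennreal (2*R*b*(1/2)^k)"
      using R b by (simp add: ennreal_mult'[symmetric] mult.assoc)
  qed auto
  also have "\<dots> = ennreal (\<Sum>k. 2*R*b*(1/2)^k)"
    using R b by (intro suminf_ennreal2) (auto intro!: summable_mult summable_geometric)
  also have "(\<Sum>k. 2*R*b*(1/2::real)^k) = 4*R*b"
    by (subst suminf_mult) (auto simp: suminf_geometric summable_geometric)
  finally show ?thesis .
qed


theorem lemma9:
  fixes M :: "'a measure" and X :: "'a \<Rightarrow> 'd::euclidean_space"
    and \<sigma> \<delta> :: real
  assumes "prob_space M"
    and "X \<in> borel_measurable M"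
    and "integrable M X"
    and "integral\<^sup>L M X = 0"
    and "\<sigma> > 0"
    and "\<forall>t>0. measure M {\<omega> \<in> space M. norm (X \<omega>) \<ge> t} \<le> 2 * exp (- (t^2) / \<sigma>^2)"
    and "0 < \<delta>" and "\<delta> < 1"
  shows "\<exists>(N :: ('a \<times> real) measure) \<pi> Xb.
           prob_space N \<and> \<pi> \<in> measurable N M \<and> distr N M \<pi> = M \<and>
           Xb \<in> borel_measurable N \<and> integrable N Xb \<and> integral\<^sup>L N Xb = (0::'d) \<and>
           measure N {\<omega> \<in> space N. Xb \<omega> = X (\<pi> \<omega>)} \<ge> 1 - \<delta> \<and>
           (AE \<omega> in N. norm (Xb \<omega>) < 3 * \<sigma> * sqrt (ln (4 / \<delta>)))"
proof -
  interpret prob_space M by fact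
  note Xm[measurable] = assms(2)
  have sig: "\<sigma> > 0" and d0: "0 < \<delta>" and d1: "\<delta> < 1" using assms by auto
  define R where "R = 3 * \<sigma> * sqrt (ln (4 / \<delta>))"
  define e where "e = (\<delta>/4)^9"
  define q where "q = \<delta>/2"
  define L where "L = ln (4/\<delta>)"
  have L2: "L \<ge> ln 2" unfolding L_def using d0 d1 by (subst ln_le_cancel_iff) (auto simp: field_simps)
  have ln2: "ln (2::real) > 0" by simp
  have Lpos: "L > 0" using L2 ln2 by linarith
  have Rpos: "R > 0" unfolding R_def using sig Lpos L_def by simp
  have RL: "R^2/\<sigma>^2 = 9 * L" unfolding R_def L_def using sig Lpos L_def
    by (simp add: power_mult_distrib)
  have eL: "exp (- (9 * L)) = e"
  proof -
    have "exp (9 * L) = (4/\<delta>)^9" unfolding L_def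
      using exp_of_nat_mult[of 9 "ln (4/\<delta>)"] d0 by simp
    then show ?thesis unfolding e_def by (simp add: exp_minus power_divide)
  qed
  have e0: "e \<ge> 0" unfolding e_def using d0 by simp
  have esmall: "e \<le> \<delta>/4 * (1/4)^8"
  proof -
    have "(\<delta>/4)^8 \<le> (1/4)^8" using d0 d1 by (intro power_mono) auto
    then have "(\<delta>/4) * (\<delta>/4)^8 \<le> (\<delta>/4) * (1/4)^8" using d0 by (intro mult_left_mono) auto
    then show ?thesis unfolding e_def by (simp add: power_Suc[symmetric] del: power_Suc)
  qed
  have p48: "(1/4::real)^8 = 1/65536" by (simp add: power_divide)
  have esmall': "e \<le> \<delta> / 262144" using esmall p48 by simp
  define Sc where "Sc = {\<omega> \<in> space M. R \<le> norm (X \<omega>)}"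
  define S where "S = {\<omega> \<in> space M. norm (X \<omega>) < R}"
  have Sm[measurable]: "S \<in> sets M" unfolding S_def by measurable
  have Scm[measurable]: "Sc \<in> sets M" unfolding Sc_def by measurable
  define p where "p = prob Sc"
  have p_le: "p \<le> 2 * e"
    using assms(6)[rule_format, OF Rpos] RL eL unfolding p_def Sc_def by simp
  have p0: "p \<ge> 0" unfolding p_def by simp
  have tl: "measure M {\<omega>\<in>space M. (real k + 1) * R \<le> norm (X \<omega>)} \<le> (2*e) * (1/2)^k" for k :: nat
  proof -
    have "measure M {\<omega>\<in>space M. (real k + 1) * R \<le> norm (X \<omega>)} \<le> 2 * exp (- (((real k + 1) * R)^2) / \<sigma>^2)"
      using assms(6)[rule_format, of "(real k + 1) * R"] Rpos by simp
    also have "- (((real k + 1) * R)^2) / \<sigma>^2 = - ((real k + 1)^2 * (9 * L))"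
      by (simp add: power_mult_distrib RL[symmetric])
    also have "exp (- ((real k + 1)^2 * (9 * L))) \<le> exp (- (9*L + real k * ln 2))"
    proof -
      have a: "(real k + 1)^2 \<ge> 1 + real k" by (simp add: power2_eq_square algebra_simps)
      have "(real k + 1)^2 * (9 * L) \<ge> (1 + real k) * (9 * L)"
        using a Lpos by (intro mult_right_mono) auto
      moreover have "real k * (9 * L) \<ge> real k * ln 2" using L2 ln2 Lpos
        by (intro mult_left_mono) auto
      ultimately show ?thesis by (simp add: algebra_simps)
    qed
    also have "exp (- (9*L + real k * ln 2)) = e * (1/2)^k"
    proof -
      have "exp (- (real k * ln 2)) = (1/2::real)^k"
        using exp_of_nat_mult[of k "- ln (2::real)"] by (simp add: exp_minus power_divide)
      moreover have "- (9*L + real k * ln 2) = - (9 * L) + - (real k * ln 2)" by simp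
      ultimately show ?thesis using eL by (simp only: exp_add)
    qed
    finally show ?thesis by simp
  qed
  define T where "T = (\<integral>\<omega>. indicator Sc \<omega> * norm (X \<omega>) \<partial>M)"
  have T_le: "T \<le> 8 * R * e"
  proof -
    have nn: "(\<integral>\<^sup>+\<omega>. ennreal (if norm (X \<omega>) \<ge> R then norm (X \<omega>) else 0) \<partial>M) \<le> ennreal (4 * R * (2*e))"
      by (rule tail_nn[OF assms(1) _ Rpos _ tl]) (use e0 in auto)
    have "T = enn2real (\<integral>\<^sup>+\<omega>. ennreal (indicator Sc \<omega> * norm (X \<omega>)) \<partial>M)"
      unfolding T_def by (rule integral_eq_nn_integral) auto
    also have "(\<integral>\<^sup>+\<omega>. ennreal (indicator Sc \<omega> * norm (X \<omega>)) \<partial>M)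
        = (\<integral>\<^sup>+\<omega>. ennreal (if norm (X \<omega>) \<ge> R then norm (X \<omega>) else 0) \<partial>M)"
      by (intro nn_integral_cong) (auto simp: Sc_def indicator_def)
    also have "enn2real \<dots> \<le> enn2real (ennreal (4 * R * (2*e)))"
      using nn by (intro enn2real_mono) auto
    finally show ?thesis using Rpos e0 by simp
  qed
  define a where "a = (\<integral>\<omega>. indicator S \<omega> *\<^sub>R X \<omega> \<partial>M)"
  have intS: "integrable M (\<lambda>\<omega>. indicator S \<omega> *\<^sub>R X \<omega>)"
    by (rule integrable_mult_indicator[OF Sm assms(3)])
  have intSc: "integrable M (\<lambda>\<omega>. indicator Sc \<omega> *\<^sub>R X \<omega>)"
    by (rule integrable_mult_indicator[OF Scm assms(3)])
  have "integral\<^sup>L M X = (\<integral>\<omega>. indicator S \<omega> *\<^sub>R X \<omega> + indicator Sc \<omega> *\<^sub>R X \<omega> \<partial>M)"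
    by (rule Bochner_Integration.integral_cong[OF refl]) (auto simp: S_def Sc_def indicator_def)
  also have "\<dots> = a + (\<integral>\<omega>. indicator Sc \<omega> *\<^sub>R X \<omega> \<partial>M)"
    unfolding a_def by (rule Bochner_Integration.integral_add[OF intS intSc])
  finally have a_eq: "a = - (\<integral>\<omega>. indicator Sc \<omega> *\<^sub>R X \<omega> \<partial>M)" using assms(4)
    by (simp add: eq_neg_iff_add_eq_0)
  have na: "norm a \<le> T"
  proof -
    have "norm a \<le> (\<integral>\<omega>. norm (indicator Sc \<omega> *\<^sub>R X \<omega>) \<partial>M)"
      unfolding a_eq norm_minus_cancel by (rule Bochner_Integration.integral_norm_bound)
    also have "\<dots> = T" unfolding T_def by (intro Bochner_Integration.integral_cong) (auto simp: indicator_def)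
    finally show ?thesis .
  qed
  have q0: "q > 0" and q1: "q < 1" unfolding q_def using d0 d1 by auto
  define D where "D = (1-q)*p + q"
  have Dq: "D \<ge> q" unfolding D_def using q1 p0 by simp
  define c where "c = - ((1-q)/D) *\<^sub>R a"
  have Dc: "D *\<^sub>R c = - ((1-q) *\<^sub>R a)" unfolding c_def using Dq q0 by simp
  have nc: "norm c < R"
  proof -
    have k0: "(1-q)/D \<ge> 0" using Dq q0 q1 by simp
    have k1: "(1-q)/D \<le> 1/q" using Dq q0 q1 by (intro frac_le) auto
    have "norm c = (1-q)/D * norm a" unfolding c_def using Dq q0 q1 by simp
    also have "\<dots> \<le> 1/q * T" using k0 k1 na q0 by (intro mult_mono) auto
    also have "\<dots> \<le> 1/q * (8 * R * e)" using T_le q0 by (intro mult_left_mono) auto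
    also have "\<dots> < R"
    proof -
      have "8 * e < q" using esmall' d0 unfolding q_def by simp
      then have "8 * R * e < q * R" using Rpos by simp
      then show ?thesis using q0 by (simp add: field_simps)
    qed
    finally show ?thesis .
  qed
  define Z where "Z \<omega> = indicator S \<omega> *\<^sub>R X \<omega> + indicator Sc \<omega> *\<^sub>R c" for \<omega>
  have Zm[measurable]: "Z \<in> borel_measurable M" unfolding Z_def by measurable
  have Zb: "norm (Z \<omega>) < R" for \<omega>
    using nc Rpos by (auto simp: Z_def S_def Sc_def indicator_def)
  have Zint: "integrable M Z"
    by (rule integrable_const_bound[where B=R]) (use Zb less_imp_le in auto)
  have intInd: "integrable M (indicat_real Sc)"
    by (rule integrable_const_bound[where B=1]) (auto simp: indicator_def)
  have intZ: "integral\<^sup>L M Z = a + p *\<^sub>R c"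
  proof -
    have "integral\<^sup>L M Z = a + (\<integral>\<omega>. indicator Sc \<omega> *\<^sub>R c \<partial>M)"
      unfolding Z_def a_def
      by (rule Bochner_Integration.integral_add[OF intS]) (auto intro!: integrable_scaleR_left intInd)
    also have "(\<integral>\<omega>. indicator Sc \<omega> *\<^sub>R c \<partial>M) = p *\<^sub>R c"
      by (subst Bochner_Integration.integral_scaleR_left) (auto simp: intInd p_def Sc_def[symmetric])
    finally show ?thesis .
  qed
  define B where "B = map_pmf (of_bool :: bool \<Rightarrow> real) (bernoulli_pmf q)"
  define Q where "Q = measure_pmf B"
  define N where "N = M \<Otimes>\<^sub>M Q"
  define Xb where "Xb (x::'a \<times> real) = Z (fst x) + indicator {1} (snd x) *\<^sub>R (c - Z (fst x))" for x
  interpret Q: prob_space Q unfolding Q_def by (rule prob_space_measure_pmf)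
  interpret PQ: pair_prob_space M Q ..
  have Nprob: "prob_space N" unfolding N_def by (rule prob_space_pair) (auto intro: prob_space_measure_pmf assms(1) simp: Q_def)
  have Zf[measurable]: "(\<lambda>x. Z (fst x)) \<in> borel_measurable N" unfolding N_def by (rule measurable_compose[OF measurable_fst Zm])
  have Xf[measurable]: "(\<lambda>x. X (fst x)) \<in> borel_measurable N" unfolding N_def by (rule measurable_compose[OF measurable_fst Xm])
  have If[measurable]: "(\<lambda>x. indicator {1::real} (snd x) :: real) \<in> borel_measurable N"
    unfolding N_def Q_def by (rule measurable_compose[OF measurable_snd]) simp
  have Xbm[measurable]: "Xb \<in> borel_measurable N" unfolding Xb_def
    using Zf If by (intro borel_measurable_add borel_measurable_scaleR borel_measurable_diff) auto
  have Xbb: "norm (Xb x) < R" for x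
    using Zb[of "fst x"] nc by (auto simp: Xb_def indicator_def)
  have Xbint: "integrable N Xb"
  proof -
    interpret NP: prob_space N by (rule Nprob)
    show ?thesis by (rule NP.integrable_const_bound[where B=R]) (auto intro!: AE_I2 less_imp_le[OF Xbb])
  qed
  show ?thesis
  proof (intro exI conjI)
    show "prob_space N" by fact
    show "fst \<in> measurable N M" unfolding N_def by simp
    show "distr N M fst = M" unfolding N_def by (rule Q.distr_pair_fst)
    show "Xb \<in> borel_measurable N" by fact
    show "integrable N Xb" by fact
    show "AE \<omega> in N. norm (Xb \<omega>) < 3 * \<sigma> * sqrt (ln (4 / \<delta>))"
      using Xbb unfolding R_def by simp
    show "integral\<^sup>L N Xb = 0"
    proof -
      have inner: "(\<integral>u. Xb (\<omega>, u) \<partial>Q) = Z \<omega> + q *\<^sub>R (c - Z \<omega>)" for \<omega>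
      proof -
        have "(\<integral>u. Xb (\<omega>, u) \<partial>Q) = (\<integral>u. Z \<omega> \<partial>Q) + (\<integral>u. indicator {1} u *\<^sub>R (c - Z \<omega>) \<partial>Q)"
          unfolding Xb_def fst_conv snd_conv
          by (intro Bochner_Integration.integral_add Q.integrable_const integrable_scaleR_left Q.integrable_const_bound[where B=1])
             (auto simp: Q_def indicator_def)
        also have "(\<integral>u. indicator {1} u *\<^sub>R (c - Z \<omega>) \<partial>Q) = (\<integral>u. indicator {1} u \<partial>Q) *\<^sub>R (c - Z \<omega>)"
          by (rule Bochner_Integration.integral_scaleR_left, rule Q.integrable_const_bound[where B=1])
             (auto simp: Q_def indicator_def)
        also have "(\<integral>u. indicator {1} u \<partial>Q) = q"
          unfolding Q_def B_def using q0 q1 by (simp add: indicator_def)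
        finally show ?thesis using Q.prob_space by simp
      qed
      have "integral\<^sup>L N Xb = (\<integral>\<omega>. (\<integral>u. Xb (\<omega>, u) \<partial>Q) \<partial>M)"
        unfolding N_def by (rule PQ.integral_fst'[symmetric]) (use Xbint N_def in simp)
      also have "\<dots> = (\<integral>\<omega>. (1-q) *\<^sub>R Z \<omega> + q *\<^sub>R c \<partial>M)"
        unfolding inner by (intro Bochner_Integration.integral_cong) (auto simp: algebra_simps)
      also have "\<dots> = (1-q) *\<^sub>R integral\<^sup>L M Z + q *\<^sub>R c"
        using Zint by (subst Bochner_Integration.integral_add) (auto simp: prob_space)
      also have "\<dots> = (1-q) *\<^sub>R a + D *\<^sub>R c"
        unfolding intZ D_def by (simp add: algebra_simps)
      also have "\<dots> = 0" using Dc by simp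
      finally show ?thesis .
    qed
    show "measure N {\<omega> \<in> space N. Xb \<omega> = X (fst \<omega>)} \<ge> 1 - \<delta>"
    proof -
      have setm: "{\<omega> \<in> space N. Xb \<omega> = X (fst \<omega>)} \<in> sets N" by measurable
      have sub: "S \<times> {0} \<subseteq> {\<omega> \<in> space N. Xb \<omega> = X (fst \<omega>)}"
        by (auto simp: N_def Q_def space_pair_measure Xb_def Z_def S_def Sc_def indicator_def)
      have mQ: "measure Q {0} = 1 - q"
      proof -
        have "(of_bool :: bool \<Rightarrow> real) -` {0} = {False}" by auto
        then have "measure Q {0} = measure (measure_pmf (bernoulli_pmf q)) {False}"
          unfolding Q_def B_def by (simp only: measure_map_pmf)
        then show ?thesis using q0 q1 by (simp add: measure_pmf_single)
      qed
      have mS: "prob S = 1 - p"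
      proof -
        have "S = space M - Sc" by (auto simp: S_def Sc_def)
        then show ?thesis using prob_compl[OF Scm] by (simp add: p_def)
      qed
      have "measure N (S \<times> {0}) = prob S * measure Q {0}"
        unfolding N_def using Q.emeasure_pair_measure_Times[OF Sm, of "{0}"]
        by (simp add: measure_def Q_def enn2real_mult)
      also have "\<dots> = (1-p)*(1-q)" using mS mQ by simp
      also have "\<dots> \<ge> 1 - \<delta>"
      proof -
        have "(1-p)*(1-q) = 1 - p - q + p*q" by (simp add: algebra_simps)
        moreover have "p*q \<ge> 0" using p0 q0 by simp
        moreover have "p \<le> \<delta>/2" using p_le esmall' d0 by simp
        ultimately show ?thesis unfolding q_def by linarith
      qed
      finally have "1 - \<delta> \<le> measure N (S \<times> {0})" .
      also have "\<dots> \<le> measure N {\<omega> \<in> space N. Xb \<omega> = X (fst \<omega>)}"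
        proof -
        interpret NP: prob_space N by (rule Nprob)
        show ?thesis using setm sub by (intro NP.finite_measure_mono) auto
      qed
      finally show ?thesis .
    qed
  qed
qed

end
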